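(* For integers $n\geq 3$ and $m\geq 1$, $$\chi_\rho(FSSD_m(S'(C_n))) = \begin{cases} 3, & n \text{ even},\\ 5, & n\text{ odd}.\end{cases}$$
   Context: All graphs are finite and simple. For a positive integer $i$, an $i$-packing in a graph is a set of vertices any two distinct members of which are at distance greater than $i$. The packing chromatic number $\chi_\rho(H)$ is the smallest $k$ such that $V(H)$ can be partitioned into sets $V_1,\dots,V_k$ with each $V_i$ an $i$-packing. For a positive integer $m$, $FSSD_m(G)$ is obtained from $G$ by replacing each edge $xy$ by a copy of $K_{2,m}$: the edge $xy$ is deleted and $m$ new vertices are added, each adjacent to exactly $x$ and $y$. The splitting graph $S'(G)$ of a graph $G$ with vertices $w_1,\dots,w_n$ is obtained from $G$ by adding new vertices $w_1',\dots,w_n'$, where each $w_i'$ is joined to every neighbor of $w_i$ in $G$ (equivalently, the neighborhood corona $G\star K_1$). $C_n$ is the cycle on $n$ vertices. *)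

theory Defs
  imports Main "HOL-Library.Extended_Nat"
begin

text \<open>A finite simple graph is represented by a vertex set and a symmetric,
irreflexive adjacency relation (restricted to the vertex set).\<close>
type_synonym 'a graph = "'a set \<times> ('a \<Rightarrow> 'a \<Rightarrow> bool)"

definition verts :: "'a graph \<Rightarrow> 'a set" where "verts G = fst G"
definition adj :: "'a graph \<Rightarrow> 'a \<Rightarrow> 'a \<Rightarrow> bool" where "adj G = snd G"

definition walk_len :: "'a graph \<Rightarrow> nat \<Rightarrow> 'a \<Rightarrow> 'a \<Rightarrow> bool" where
  "walk_len G k x y \<longleftrightarrow> (\<exists>p. length p = Suc k \<and> hd p = x \<and> last p = y \<and>
      set p \<subseteq> verts G \<and> (\<forall>i<k. adj G (p ! i) (p ! Suc i)))"

text \<open>Graph distance (\<infinity> if no walk exists).\<close>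
definition gdist :: "'a graph \<Rightarrow> 'a \<Rightarrow> 'a \<Rightarrow> enat" where
  "gdist G x y = (INF k \<in> {k. walk_len G k x y}. enat k)"

definition packing :: "'a graph \<Rightarrow> nat \<Rightarrow> 'a set \<Rightarrow> bool" where
  "packing G i S \<longleftrightarrow> S \<subseteq> verts G \<and>
     (\<forall>u\<in>S. \<forall>v\<in>S. u \<noteq> v \<longrightarrow> gdist G u v > enat i)"

definition packing_colouring :: "'a graph \<Rightarrow> nat \<Rightarrow> ('a \<Rightarrow> nat) \<Rightarrow> bool" where
  "packing_colouring G k c \<longleftrightarrow> (\<forall>v\<in>verts G. c v \<in> {1..k}) \<and>
     (\<forall>i\<in>{1..k}. packing G i {v\<in>verts G. c v = i})"

definition packing_chromatic :: "'a graph \<Rightarrow> nat" where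
  "packing_chromatic G = (LEAST k. \<exists>c. packing_colouring G k c)"

definition cycle_graph :: "nat \<Rightarrow> nat graph" where
  "cycle_graph n = ({0..<n}, \<lambda>i j. i < n \<and> j < n \<and> (j = Suc i mod n \<or> i = Suc j mod n))"

text \<open>Splitting graph S'(G): (v,False) are the original vertices, (v,True) the copies v'.
 v' is joined to every neighbour of v.\<close>
definition splitting_graph :: "'a graph \<Rightarrow> ('a \<times> bool) graph" where
  "splitting_graph G = (verts G \<times> UNIV,
     \<lambda>(u,a) (v,b). u \<in> verts G \<and> v \<in> verts G \<and> adj G u v \<and> \<not> (a \<and> b))"

datatype 'a subdiv = Orig 'a | Sub "'a set" nat

text \<open>FSSD_m(G): each edge xy is replaced by m new vertices Sub {x,y} j (j < m),
 each adjacent exactly to x and y.\<close>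
definition fssd :: "nat \<Rightarrow> 'a graph \<Rightarrow> 'a subdiv graph" where
  "fssd m G = (
     let V = Orig ` verts G \<union>
             {Sub {x,y} j | x y j. x \<in> verts G \<and> y \<in> verts G \<and> adj G x y \<and> j < m}
     in (V, \<lambda>a b. a \<in> V \<and> b \<in> V \<and>
          ((\<exists>x e j. a = Orig x \<and> b = Sub e j \<and> x \<in> e) \<or>
           (\<exists>x e j. b = Orig x \<and> a = Sub e j \<and> x \<in> e))))"

end

theory Submission
  imports Defs
begin

lemma walk0: "walk_len G 0 x y \<longleftrightarrow> x = y \<and> x \<in> verts G"
proof
  assume "walk_len G 0 x y"
  then obtain p where p: "length p = 1" "hd p = x" "last p = y" "set p \<subseteq> verts G"
    unfolding walk_len_def by auto
  then obtain a where "p = [a]" by (metis One_nat_def length_0_conv length_Suc_conv)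
  then show "x = y \<and> x \<in> verts G" using p by auto
next
  assume "x = y \<and> x \<in> verts G"
  then show "walk_len G 0 x y" unfolding walk_len_def by (intro exI[of _ "[x]"]) auto
qed

lemma walkSuc: "walk_len G (Suc k) x y \<longleftrightarrow> x \<in> verts G \<and> (\<exists>z. adj G x z \<and> walk_len G k z y)"
proof
  assume "walk_len G (Suc k) x y"
  then obtain p where p: "length p = Suc (Suc k)" "hd p = x" "last p = y" "set p \<subseteq> verts G"
    "\<forall>i<Suc k. adj G (p ! i) (p ! Suc i)"
    unfolding walk_len_def by auto
  then obtain q where q: "p = x # q" by (cases p) auto
  have lq: "length q = Suc k" using p q by auto
  then have qne: "q \<noteq> []" by auto
  have "adj G x (hd q)" using p(5) q qne by (auto simp: hd_conv_nth)
  moreover have "walk_len G k (hd q) y"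
    unfolding walk_len_def
  proof (intro exI[of _ q] conjI allI impI)
    show "last q = y" using p q qne by auto
    show "set q \<subseteq> verts G" using p q by auto
    fix i assume "i < k"
    then show "adj G (q ! i) (q ! Suc i)" using p(5) q by force
  qed (use lq in auto)
  moreover have "x \<in> verts G" using p q by auto
  ultimately show "x \<in> verts G \<and> (\<exists>z. adj G x z \<and> walk_len G k z y)" by blast
next
  assume "x \<in> verts G \<and> (\<exists>z. adj G x z \<and> walk_len G k z y)"
  then obtain z q where x: "x \<in> verts G" and a: "adj G x z" and q: "length q = Suc k" "hd q = z" "last q = y"
    "set q \<subseteq> verts G" "\<forall>i<k. adj G (q ! i) (q ! Suc i)"
    unfolding walk_len_def by auto
  have qne: "q \<noteq> []" using q by auto
  show "walk_len G (Suc k) x y"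
    unfolding walk_len_def
  proof (intro exI[of _ "x # q"] conjI allI impI)
    fix i assume i: "i < Suc k"
    show "adj G ((x # q) ! i) ((x # q) ! Suc i)"
    proof (cases i)
      case 0 then show ?thesis using a q qne by (auto simp: hd_conv_nth)
    next
      case (Suc i') then show ?thesis using q i by auto
    qed
  qed (use q x qne in auto)
qed

lemma gdist_le: "walk_len G k x y \<Longrightarrow> gdist G x y \<le> enat k"
  unfolding gdist_def by (rule INF_lower) auto

lemma gdist_gt: "(\<And>j. walk_len G j x y \<Longrightarrow> k < j) \<Longrightarrow> enat k < gdist G x y"
proof -
  assume h: "\<And>j. walk_len G j x y \<Longrightarrow> k < j"
  have "enat (Suc k) \<le> gdist G x y"
    unfolding gdist_def by (rule INF_greatest) (auto dest: h simp: Suc_le_eq)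
  then show ?thesis by (metis Suc_ile_eq order_le_less)
qed

lemma conflict:
  assumes "packing_colouring G K c" "a \<noteq> b" "a \<in> verts G" "b \<in> verts G" "c a = c b"
    "gdist G a b \<le> enat d" "d \<le> c a"
  shows False
proof -
  have "c a \<in> {1..K}" using assms unfolding packing_colouring_def by auto
  then have "packing G (c a) {v\<in>verts G. c v = c a}" using assms unfolding packing_colouring_def by auto
  then have "gdist G a b > enat (c a)" using assms unfolding packing_def by auto
  moreover have "enat d \<le> enat (c a)" using assms by simp
  ultimately show False using assms(6) by (meson leD order_trans)
qed


lemma verts_fssd: "verts (fssd m G) = Orig ` verts G \<union>
             {Sub {x,y} j | x y j. x \<in> verts G \<and> y \<in> verts G \<and> adj G x y \<and> j < m}"
  unfolding fssd_def verts_def Let_def by simp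

lemma adj_fssd: "adj (fssd m G) a b \<longleftrightarrow> a \<in> verts (fssd m G) \<and> b \<in> verts (fssd m G) \<and>
          ((\<exists>x e j. a = Orig x \<and> b = Sub e j \<and> x \<in> e) \<or>
           (\<exists>x e j. b = Orig x \<and> a = Sub e j \<and> x \<in> e))"
  unfolding verts_fssd unfolding fssd_def verts_def adj_def Let_def by simp

lemma adj_fssd_verts: "adj (fssd m G) a b \<Longrightarrow> a \<in> verts (fssd m G) \<and> b \<in> verts (fssd m G)"
  using adj_fssd by metis

lemma adj_OO[simp]: "\<not> adj (fssd m G) (Orig x) (Orig y)"
  by (simp add: adj_fssd)

lemma adj_SS[simp]: "\<not> adj (fssd m G) (Sub e j) (Sub e' j')"
  by (simp add: adj_fssd)

lemma edge_fssd:
  assumes "adj G x y" "x \<in> verts G" "y \<in> verts G" "j < m"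
  shows "adj (fssd m G) (Orig x) (Sub {x,y} j)" "adj (fssd m G) (Sub {x,y} j) (Orig x)"
        "adj (fssd m G) (Orig y) (Sub {x,y} j)" "adj (fssd m G) (Sub {x,y} j) (Orig y)"
  using assms unfolding adj_fssd verts_fssd by blast+

lemma d1: "adj (fssd m G) a b \<Longrightarrow> gdist (fssd m G) a b \<le> enat 1"
  by (rule gdist_le) (auto simp: walkSuc walk0 dest: adj_fssd_verts)

lemma d2: "adj (fssd m G) a b \<Longrightarrow> adj (fssd m G) b c \<Longrightarrow> gdist (fssd m G) a c \<le> enat 2"
  by (rule gdist_le) (auto simp: walkSuc walk0 numeral_eq_Suc dest: adj_fssd_verts)

lemma d3: "adj (fssd m G) a b \<Longrightarrow> adj (fssd m G) b c \<Longrightarrow> adj (fssd m G) c d \<Longrightarrow> gdist (fssd m G) a d \<le> enat 3"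
  by (rule gdist_le) (auto simp: walkSuc walk0 numeral_eq_Suc dest: adj_fssd_verts)

lemma d4: "adj (fssd m G) a b \<Longrightarrow> adj (fssd m G) b c \<Longrightarrow> adj (fssd m G) c d \<Longrightarrow> adj (fssd m G) d e \<Longrightarrow> gdist (fssd m G) a e \<le> enat 4"
  by (rule gdist_le) (auto simp: walkSuc walk0 numeral_eq_Suc dest: adj_fssd_verts)

lemma verts_S: "verts (splitting_graph G) = verts G \<times> UNIV"
  unfolding splitting_graph_def verts_def by simp

lemma adj_S: "adj (splitting_graph G) (u,a) (v,b) \<longleftrightarrow> u \<in> verts G \<and> v \<in> verts G \<and> adj G u v \<and> \<not> (a \<and> b)"
  unfolding splitting_graph_def verts_def adj_def by simp

lemma verts_C: "verts (cycle_graph n) = {0..<n}"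
  unfolding cycle_graph_def verts_def by simp

lemma adj_C: "adj (cycle_graph n) i j \<longleftrightarrow> i < n \<and> j < n \<and> (j = Suc i mod n \<or> i = Suc j mod n)"
  unfolding cycle_graph_def adj_def by simp


lemma suc_ne1: "n \<ge> 3 \<Longrightarrow> i < n \<Longrightarrow> Suc i mod n \<noteq> i"
  by (cases "Suc i = n") auto

lemma suc_ne2: "n \<ge> 3 \<Longrightarrow> i < n \<Longrightarrow> Suc (Suc i mod n) mod n \<noteq> i"
proof -
  assume n: "n \<ge> 3" "i < n"
  consider "i = n - 1" | "i = n - 2" | "i + 2 < n" using n by linarith
  then show ?thesis
  proof cases
    case 1 then show ?thesis using n by (simp add: Suc_diff_Suc mod_Suc)
  next
    case 2
    then have "Suc i = n - 1" using n by simp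
    then have "Suc i mod n = n - 1" using n by simp
    then show ?thesis using n 2 by (simp add: mod_Suc)
  next
    case 3 then show ?thesis by simp
  qed
qed

lemma pred_ex: "l < (n::nat) \<Longrightarrow> \<exists>i<n. l = Suc i mod n"
proof (cases l)
  case 0
  assume "l < n" then show ?thesis using 0 by (intro exI[of _ "n - 1"]) auto
next
  case (Suc i)
  assume "l < n" then show ?thesis using Suc by (intro exI[of _ i]) auto
qed


lemma walk_OO_small:
  assumes w: "walk_len (fssd m G) j (Orig x) (Orig y)" and j: "j \<le> 3"
  shows "x = y \<or> adj G x y \<or> adj G y x"
proof -
  have "j = 0 \<or> j = 1 \<or> j = 2 \<or> j = 3" using j by auto
  then show ?thesis
  proof (elim disjE)
    assume "j = 0" then show ?thesis using w by (simp add: walk0)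
  next
    assume "j = 1" then show ?thesis using w by (auto simp: walkSuc walk0 adj_fssd)
  next
    assume "j = 3" then show ?thesis using w by (auto simp: walkSuc walk0 numeral_eq_Suc adj_fssd)
  next
    assume j2: "j = 2"
    then obtain z where z: "adj (fssd m G) (Orig x) z" "adj (fssd m G) z (Orig y)"
      using w by (auto simp: walkSuc walk0 numeral_eq_Suc)
    then obtain e jj where ze: "z = Sub e jj" "x \<in> e" "y \<in> e" by (auto simp: adj_fssd)
    then have "z \<in> verts (fssd m G)" using z adj_fssd_verts by blast
    then obtain a b where "e = {a, b}" "adj G a b" using ze by (auto simp: verts_fssd)
    then show ?thesis using ze by auto
  qed
qed

lemma walk_SS_small:
  assumes w: "walk_len (fssd m G) j (Sub e i) (Sub e' i')" and j: "j \<le> 1"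
  shows "Sub e i = Sub e' i'"
proof -
  have "j = 0 \<or> j = 1" using j by auto
  then show ?thesis using w by (auto simp: walkSuc walk0 adj_fssd)
qed

lemma upper:
  assumes sym: "\<forall>x y. adj G x y \<longrightarrow> adj G y x"
  and sub1: "\<forall>e j. col (Sub e j) = (1::nat)"
  and orig: "\<forall>x\<in>verts G. col (Orig x) \<in> {2..K}"
  and sep: "\<forall>x\<in>verts G. \<forall>y\<in>verts G. x \<noteq> y \<longrightarrow> col (Orig x) = col (Orig y) \<longrightarrow>
              col (Orig x) \<le> 3 \<and> \<not> adj G x y"
  and K2: "K \<ge> 2"
  shows "packing_colouring (fssd m G) K col"
  unfolding packing_colouring_def
proof (intro conjI ballI)
  fix v assume v: "v \<in> verts (fssd m G)"
  then show "col v \<in> {1..K}"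
  proof (cases v)
    case (Orig x) then show ?thesis using v orig by (auto simp: verts_fssd)
  next
    case (Sub e j) then show ?thesis using sub1 K2 by auto
  qed
next
  fix i assume i: "i \<in> {1..K}"
  show "packing (fssd m G) i {v \<in> verts (fssd m G). col v = i}"
    unfolding packing_def
  proof (intro conjI ballI impI)
    fix u v assume u: "u \<in> {v \<in> verts (fssd m G). col v = i}" and v: "v \<in> {v \<in> verts (fssd m G). col v = i}"
      and uv: "u \<noteq> v"
    show "enat i < gdist (fssd m G) u v"
    proof (rule gdist_gt)
      fix j assume w: "walk_len (fssd m G) j u v"
      show "i < j"
      proof (cases u)
        case (Orig x)
        then have x: "x \<in> verts G" using u by (auto simp: verts_fssd)
        show ?thesis
        proof (cases v)
          case (Orig y)
          then have y: "y \<in> verts G" using v by (auto simp: verts_fssd)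
          have "x \<noteq> y" using uv Orig \<open>u = Orig x\<close> by auto
          moreover have "col (Orig x) = col (Orig y)" using u v Orig \<open>u = Orig x\<close> by auto
          ultimately have h: "col (Orig x) \<le> 3" "\<not> adj G x y" "\<not> adj G y x"
            using sep x y sym by blast+
          have "i \<le> 3" using h u \<open>u = Orig x\<close> by auto
          moreover have "\<not> j \<le> 3"
            using walk_OO_small[of m G j x y] w Orig \<open>u = Orig x\<close> h \<open>x \<noteq> y\<close> by auto
          ultimately show ?thesis by auto
        next
          case (Sub e' i')
          then show ?thesis using u v sub1 orig x \<open>u = Orig x\<close> by force
        qed
      next
        case (Sub e i0)
        show ?thesis
        proof (cases v)
          case (Orig y)
          then have y: "y \<in> verts G" using v by (auto simp: verts_fssd)
          then show ?thesis using u v sub1 orig Orig \<open>u = Sub e i0\<close> by force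
        next
          case (Sub e' i')
          have "i = 1" using u sub1 \<open>u = Sub e i0\<close> by auto
          moreover have "\<not> j \<le> 1" using walk_SS_small[of m G j e i0 e' i'] w uv Sub \<open>u = Sub e i0\<close> by auto
          ultimately show ?thesis by auto
        qed
      qed
    qed
  qed auto
qed

lemma pstep:
  fixes a b d :: nat
  assumes "a \<in> {2..4}" "b \<in> {2..4}" "d \<in> {2..4}" "a \<noteq> b" "b \<noteq> d" "b = 4 \<Longrightarrow> a = d"
  shows "(if b = 4 then even d else odd b) \<noteq> (if a = 4 then even b else odd a)"
proof -
  have "a = 2 \<or> a = 3 \<or> a = 4" "b = 2 \<or> b = 3 \<or> b = 4" "d = 2 \<or> d = 3 \<or> d = 4" using assms(1-3) by auto
  then show ?thesis using assms(4-6) by (elim disjE) simp_all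
qed

context
  fixes n m K c
  assumes n3: "n \<ge> 3" and m1: "m \<ge> 1"
    and pc: "packing_colouring (fssd m (splitting_graph (cycle_graph n))) K c" and K4: "K \<le> 4"
begin

abbreviation "G0 \<equiv> splitting_graph (cycle_graph n)"
abbreviation "HH \<equiv> fssd m G0"

lemma vG0: "i < n \<Longrightarrow> (i,a) \<in> verts G0"
  by (simp add: verts_S verts_C)

lemma eG0a: "i < n \<Longrightarrow> adj G0 (i,a) (Suc i mod n, False)"
  by (simp add: adj_S verts_C adj_C)

lemma eG0b: "i < n \<Longrightarrow> adj G0 (i,False) (Suc i mod n, b)"
  by (simp add: adj_S verts_C adj_C)

lemma vO: "i < n \<Longrightarrow> Orig (i,a) \<in> verts HH"
  by (simp add: verts_fssd vG0)

lemma col: "v \<in> verts HH \<Longrightarrow> c v \<in> {1..K}"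
  using pc unfolding packing_colouring_def by auto

lemma m0: "0 < m" using m1 by simp

lemma edgeA:
  assumes "i < n"
  shows "adj HH (Orig (i,a)) (Sub {(i,a),(Suc i mod n,False)} 0)"
    "adj HH (Sub {(i,a),(Suc i mod n,False)} 0) (Orig (i,a))"
    "adj HH (Orig (Suc i mod n,False)) (Sub {(i,a),(Suc i mod n,False)} 0)"
    "adj HH (Sub {(i,a),(Suc i mod n,False)} 0) (Orig (Suc i mod n,False))"
  using edge_fssd[OF eG0a[OF assms] vG0[OF assms] vG0 m0] assms n3 by auto

lemma edgeB:
  assumes "i < n"
  shows "adj HH (Orig (i,False)) (Sub {(i,False),(Suc i mod n,b)} 0)"
    "adj HH (Sub {(i,False),(Suc i mod n,b)} 0) (Orig (i,False))"
    "adj HH (Orig (Suc i mod n,b)) (Sub {(i,False),(Suc i mod n,b)} 0)"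
    "adj HH (Sub {(i,False),(Suc i mod n,b)} 0) (Orig (Suc i mod n,b))"
  using edge_fssd[OF eG0b[OF assms] vG0[OF assms] vG0 m0] assms n3 by auto

lemma cf: "a \<noteq> b \<Longrightarrow> a \<in> verts HH \<Longrightarrow> b \<in> verts HH \<Longrightarrow> c a = c b \<Longrightarrow>
   gdist HH a b \<le> enat d \<Longrightarrow> d \<le> c a \<Longrightarrow> False"
  using conflict[OF pc] by blast

lemma L1a:
  assumes i: "i < n"
  shows "c (Orig (Suc i mod n, False)) \<noteq> 1"
proof
  define j where "j = Suc i mod n"
  define k where "k = Suc j mod n"
  have j: "j < n" and k: "k < n" using i n3 by (auto simp: j_def k_def)
  have ij: "i \<noteq> j" using suc_ne1[OF n3 i] j_def by simp
  have ik: "i \<noteq> k" using suc_ne2[OF n3 i] j_def k_def by simp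
  have jk: "j \<noteq> k" using suc_ne1[OF n3 j] k_def by simp
  define x where "x = Orig (j, False)"
  define s1 where "s1 = Sub {(j,False),(k,False)} 0"
  define s2 where "s2 = Sub {(i,False),(j,False)} 0"
  define s3 where "s3 = Sub {(j,False),(k,True)} 0"
  define s4 where "s4 = Sub {(i,True),(j,False)} 0"
  have a1: "adj HH x s1" "adj HH s1 x" using edgeA[OF j, of False] k_def x_def s1_def by auto
  have a2: "adj HH x s2" "adj HH s2 x" using edgeA[OF i, of False] j_def x_def s2_def by auto
  have a3: "adj HH x s3" "adj HH s3 x" using edgeB[OF j, of True] k_def x_def s3_def by auto
  have a4: "adj HH x s4" "adj HH s4 x" using edgeA[OF i, of True] j_def x_def s4_def by auto
  have vx: "x \<in> verts HH" using a1 adj_fssd_verts by blast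
  have vs: "s1 \<in> verts HH" "s2 \<in> verts HH" "s3 \<in> verts HH" "s4 \<in> verts HH"
    using a1 a2 a3 a4 adj_fssd_verts by blast+
  assume c1: "c (Orig (Suc i mod n, False)) = 1"
  then have cx: "c x = 1" using x_def j_def by simp
  have n1: "c s \<noteq> 1" if "adj HH x s" "s \<in> verts HH" "s \<noteq> x" for s
    using cf[of x s 1] that cx vx d1[OF that(1)] by auto
  have ne: "s1 \<noteq> x" "s2 \<noteq> x" "s3 \<noteq> x" "s4 \<noteq> x" by (auto simp: s1_def s2_def s3_def s4_def x_def)
  have cs: "c s1 \<in> {2..4}" "c s2 \<in> {2..4}" "c s3 \<in> {2..4}" "c s4 \<in> {2..4}"
    using n1[OF a1(1) vs(1) ne(1)] n1[OF a2(1) vs(2) ne(2)] n1[OF a3(1) vs(3) ne(3)] n1[OF a4(1) vs(4) ne(4)]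
      col[OF vs(1)] col[OF vs(2)] col[OF vs(3)] col[OF vs(4)] K4 by auto
  have n2: "c s \<noteq> c t" if "adj HH s x" "adj HH x t" "s \<in> verts HH" "t \<in> verts HH" "s \<noteq> t" "c s \<ge> 2" for s t
    using cf[of s t 2] that d2[OF that(1,2)] by auto
  have dd: "s1 \<noteq> s2" "s1 \<noteq> s3" "s1 \<noteq> s4" "s2 \<noteq> s3" "s2 \<noteq> s4" "s3 \<noteq> s4"
    using ij ik jk by (auto simp: s1_def s2_def s3_def s4_def doubleton_eq_iff)
  have "c s1 \<noteq> c s2" "c s1 \<noteq> c s3" "c s1 \<noteq> c s4" "c s2 \<noteq> c s3" "c s2 \<noteq> c s4" "c s3 \<noteq> c s4"
    using n2[OF a1(2) a2(1) vs(1) vs(2) dd(1)] n2[OF a1(2) a3(1) vs(1) vs(3) dd(2)]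
      n2[OF a1(2) a4(1) vs(1) vs(4) dd(3)] n2[OF a2(2) a3(1) vs(2) vs(3) dd(4)]
      n2[OF a2(2) a4(1) vs(2) vs(4) dd(5)] n2[OF a3(2) a4(1) vs(3) vs(4) dd(6)] cs by auto
  then show False using cs by auto
qed

lemma L1: "l < n \<Longrightarrow> c (Orig (l, False)) \<noteq> 1"
  using pred_ex L1a by blast

lemma Lrange: "l < n \<Longrightarrow> c (Orig (l, False)) \<in> {2..K}"
  using L1[of l] col[OF vO[of l False]] by fastforce

lemma L2:
  assumes i: "i < n"
  shows "c (Orig (i, False)) \<noteq> c (Orig (Suc i mod n, False))"
proof
  assume e: "c (Orig (i, False)) = c (Orig (Suc i mod n, False))"
  have j: "Suc i mod n < n" using i by auto
  have ne: "Orig (i, False) \<noteq> Orig (Suc i mod n, False)" using suc_ne1[OF n3 i] by auto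
  show False
    using cf[OF ne vO[OF i] vO[OF j] e d2[OF edgeA(1)[OF i] edgeA(4)[OF i]]] Lrange[OF i] by auto
qed

lemma L3:
  assumes i: "i < n"
  and c4: "c (Orig (Suc i mod n, False)) = 4"
  shows "c (Orig (i, False)) = c (Orig (Suc (Suc i mod n) mod n, False))"
proof (rule ccontr)
  assume neq: "c (Orig (i, False)) \<noteq> c (Orig (Suc (Suc i mod n) mod n, False))"
  define j where "j = Suc i mod n"
  define k where "k = Suc j mod n"
  have j: "j < n" and k: "k < n" using i n3 by (auto simp: j_def k_def)
  have ij: "i \<noteq> j" using suc_ne1[OF n3 i] j_def by simp
  have ik: "i \<noteq> k" using suc_ne2[OF n3 i] j_def k_def by simp
  have jk: "j \<noteq> k" using suc_ne1[OF n3 j] k_def by simp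
  define ui where "ui = Orig (i, False)"
  define uj where "uj = Orig (j, False)"
  define uk where "uk = Orig (k, False)"
  define vj where "vj = Orig (j, True)"
  define aij where "aij = Sub {(i,False),(j,False)} 0"
  define ajk where "ajk = Sub {(j,False),(k,False)} 0"
  define s where "s = Sub {(i,False),(j,True)} 0"
  define t where "t = Sub {(j,True),(k,False)} 0"
  note defs = ui_def uj_def uk_def vj_def aij_def ajk_def s_def t_def j_def k_def
  have A: "adj HH ui aij" "adj HH aij ui" "adj HH uj aij" "adj HH aij uj"
    using edgeA[OF i, of False] by (auto simp: defs)
  have B: "adj HH uj ajk" "adj HH ajk uj" "adj HH uk ajk" "adj HH ajk uk"
    using edgeA[OF j, of False] by (auto simp: defs)
  have S: "adj HH ui s" "adj HH s ui" "adj HH vj s" "adj HH s vj"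
    using edgeB[OF i, of True] by (auto simp: defs)
  have T: "adj HH vj t" "adj HH t vj" "adj HH uk t" "adj HH t uk"
    using edgeA[OF j, of True] by (auto simp: defs)
  have V: "ui \<in> verts HH" "uj \<in> verts HH" "uk \<in> verts HH" "vj \<in> verts HH" "s \<in> verts HH" "t \<in> verts HH"
    using A B S T adj_fssd_verts by blast+
  have cj: "c uj = 4" using c4 by (simp add: defs)
  have ci: "c ui \<in> {2..4}" "c uk \<in> {2..4}" using Lrange[OF i] Lrange[OF k] K4 by (auto simp: defs)
  have neq': "c ui \<noteq> c uk" using neq by (simp add: defs)
  have ci4: "c ui \<noteq> 4"
    using cf[of ui uj 2] ij V d2[OF A(1) A(4)] cj by (auto simp: defs)
  have ck4: "c uk \<noteq> 4"
    using cf[of uk uj 2] jk V d2[OF B(3) B(2)] cj by (auto simp: defs)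
  have cv: "c vj \<in> {1..4}" using col[OF V(4)] K4 by auto
  have cv4: "c vj \<noteq> 4"
    using cf[of vj uj 4] V d4[OF T(1) T(4) B(3) B(2)] cj by (auto simp: defs)
  show False
  proof (cases "c vj = 1")
    case False
    then have "c vj \<ge> 2" using cv by auto
    moreover have "c vj \<noteq> c ui" using cf[of vj ui 2] V d2[OF S(3) S(2)] \<open>c vj \<ge> 2\<close> by (auto simp: defs)
    moreover have "c vj \<noteq> c uk" using cf[of vj uk 2] V d2[OF T(1) T(4)] \<open>c vj \<ge> 2\<close> by (auto simp: defs)
    ultimately show False using cv cv4 ci ci4 ck4 neq' by auto
  next
    case True
    have cs: "c s \<in> {1..4}" "c t \<in> {1..4}" using col[OF V(5)] col[OF V(6)] K4 by auto
    have s1: "c s \<noteq> 1" using cf[of vj s 1] V d1[OF S(3)] True by (auto simp: defs)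
    have t1: "c t \<noteq> 1" using cf[of vj t 1] V d1[OF T(1)] True by (auto simp: defs)
    have s4: "c s \<noteq> 4" using cf[of s uj 3] V d3[OF S(2) A(1) A(4)] cj by (auto simp: defs)
    have t4: "c t \<noteq> 4" using cf[of t uj 3] V d3[OF T(4) B(3) B(2)] cj by (auto simp: defs)
    have st: "c s \<noteq> c t" using cf[of s t 2] V d2[OF S(4) T(1)] s1 cs ik
      by (auto simp: defs doubleton_eq_iff)
    show False
    proof (cases "c s = 2")
      case True
      then have "c t = 3" using cs t1 t4 st by auto
      have "c ui \<noteq> 2" using cf[of s ui 1] V d1[OF S(2)] True by (auto simp: defs)
      then have "c ui = 3" using ci ci4 by auto
      then show False using cf[of t ui 3] V d3[OF T(2) S(3) S(2)] \<open>c t = 3\<close> by (auto simp: defs)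
    next
      case False
      then have "c s = 3" "c t = 2" using cs t1 t4 st s1 s4 by auto
      have "c uk \<noteq> 2" using cf[of t uk 1] V d1[OF T(4)] \<open>c t = 2\<close> by (auto simp: defs)
      then have "c uk = 3" using ci ck4 by auto
      then show False using cf[of s uk 3] V d3[OF S(4) T(1) T(4)] \<open>c s = 3\<close> by (auto simp: defs)
    qed
  qed
qed

lemma lower2: "K \<le> 2 \<Longrightarrow> False"
  using L2[of 0] Lrange[of 0] Lrange[of "Suc 0 mod n"] n3 by auto

lemma lower_odd: "odd n \<Longrightarrow> False"
proof -
  assume odd: "odd n"
  define p where "p i = (if c (Orig (i, False)) = 4 then even (c (Orig (Suc i mod n, False)))
     else odd (c (Orig (i, False))))" for i
  have step: "p (Suc i mod n) \<noteq> p i" if i: "i < n" for i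
  proof -
    define j where "j = Suc i mod n"
    define k where "k = Suc j mod n"
    have j: "j < n" and k: "k < n" using i n3 by (auto simp: j_def k_def)
    have r: "c (Orig (i, False)) \<in> {2..4}" "c (Orig (j, False)) \<in> {2..4}" "c (Orig (k, False)) \<in> {2..4}"
      using Lrange[OF i] Lrange[OF j] Lrange[OF k] K4 by auto
    have d: "c (Orig (i, False)) \<noteq> c (Orig (j, False))" "c (Orig (j, False)) \<noteq> c (Orig (k, False))"
      using L2[OF i] L2[OF j] by (auto simp: j_def k_def)
    have e: "c (Orig (j, False)) = 4 \<Longrightarrow> c (Orig (i, False)) = c (Orig (k, False))"
      using L3[OF i] by (auto simp: j_def k_def)
    have "p j \<noteq> p i" unfolding p_def k_def[symmetric] j_def[symmetric]
      by (rule pstep) (use r d e in auto)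
    then show ?thesis by (simp add: j_def)
  qed
  have ind: "i < n \<Longrightarrow> p i = (p 0 = even i)" for i
  proof (induction i)
    case 0 then show ?case by simp
  next
    case (Suc i)
    then have lt: "i < n" "Suc i mod n = Suc i" by auto
    have "p (Suc i) \<noteq> p i" using step[OF lt(1)] lt(2) by simp
    moreover have "p i = (p 0 = even i)" using Suc.IH lt(1) by blast
    ultimately show ?case by auto
  qed
  have "p (Suc (n - 1) mod n) \<noteq> p (n - 1)" using step[of "n - 1"] n3 by simp
  moreover have "Suc (n - 1) mod n = 0" using n3 by simp
  moreover have "even (n - 1)" using odd n3 by simp
  ultimately show False using ind[of "n - 1"] n3 by simp
qed

end


lemma symG0: "\<forall>x y. adj (splitting_graph (cycle_graph n)) x y \<longrightarrow> adj (splitting_graph (cycle_graph n)) y x"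
proof (intro allI impI)
  fix x y :: "nat \<times> bool"
  assume h: "adj (splitting_graph (cycle_graph n)) x y"
  obtain u a v b where "x = (u,a)" "y = (v,b)" by (cases x, cases y)
  then show "adj (splitting_graph (cycle_graph n)) y x" using h by (auto simp: adj_S adj_C)
qed

lemma adjG0_cases: "adj (splitting_graph (cycle_graph n)) (u,a) (v,b) \<Longrightarrow>
   u < n \<and> v < n \<and> (v = Suc u mod n \<or> u = Suc v mod n)"
  by (auto simp: adj_S adj_C)

lemma par_even: "even n \<Longrightarrow> u < n \<Longrightarrow> even (Suc u mod n) \<longleftrightarrow> odd u"
  by (cases "Suc u = n") auto

definition col_even :: "(nat \<times> bool) subdiv \<Rightarrow> nat" where
  "col_even v = (case v of Orig x \<Rightarrow> if even (fst x) then 2 else 3 | Sub e j \<Rightarrow> 1)"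

definition col_odd :: "nat \<Rightarrow> (nat \<times> bool) subdiv \<Rightarrow> nat" where
  "col_odd n v = (case v of Orig x \<Rightarrow> if fst x = n - 1 then (if snd x then 5 else 4)
      else if even (fst x) then 2 else 3 | Sub e j \<Rightarrow> 1)"

lemma upper_even:
  assumes "even n" "n \<ge> 3"
  shows "packing_colouring (fssd m (splitting_graph (cycle_graph n))) 3 col_even"
proof (rule upper[OF symG0])
  show "\<forall>x\<in>verts (splitting_graph (cycle_graph n)). \<forall>y\<in>verts (splitting_graph (cycle_graph n)).
     x \<noteq> y \<longrightarrow> col_even (Orig x) = col_even (Orig y) \<longrightarrow>
     col_even (Orig x) \<le> 3 \<and> \<not> adj (splitting_graph (cycle_graph n)) x y"
  proof (intro ballI impI)
    fix x y assume x: "x \<in> verts (splitting_graph (cycle_graph n))" and y: "y \<in> verts (splitting_graph (cycle_graph n))"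
      and "x \<noteq> y" and e: "col_even (Orig x) = col_even (Orig y)"
    obtain u a v b where xy: "x = (u,a)" "y = (v,b)" by (cases x, cases y)
    have par: "even u \<longleftrightarrow> even v" using e xy by (auto simp: col_even_def split: if_splits)
    have "\<not> adj (splitting_graph (cycle_graph n)) x y"
    proof
      assume "adj (splitting_graph (cycle_graph n)) x y"
      then have "u < n \<and> v < n \<and> (v = Suc u mod n \<or> u = Suc v mod n)" using adjG0_cases xy by blast
      then show False using par par_even[OF assms(1), of u] par_even[OF assms(1), of v] by auto
    qed
    then show "col_even (Orig x) \<le> 3 \<and> \<not> adj (splitting_graph (cycle_graph n)) x y"
      by (auto simp: col_even_def)
  qed
qed (auto simp: col_even_def)

lemma upper_odd:
  assumes "odd n" "n \<ge> 3"
  shows "packing_colouring (fssd m (splitting_graph (cycle_graph n))) 5 (col_odd n)"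
proof (rule upper[OF symG0])
  show "\<forall>x\<in>verts (splitting_graph (cycle_graph n)). \<forall>y\<in>verts (splitting_graph (cycle_graph n)).
     x \<noteq> y \<longrightarrow> col_odd n (Orig x) = col_odd n (Orig y) \<longrightarrow>
     col_odd n (Orig x) \<le> 3 \<and> \<not> adj (splitting_graph (cycle_graph n)) x y"
  proof (intro ballI impI)
    fix x y assume x: "x \<in> verts (splitting_graph (cycle_graph n))" and y: "y \<in> verts (splitting_graph (cycle_graph n))"
      and ne: "x \<noteq> y" and e: "col_odd n (Orig x) = col_odd n (Orig y)"
    obtain u a v b where xy: "x = (u,a)" "y = (v,b)" by (cases x, cases y)
    have h: "u \<noteq> n - 1" "v \<noteq> n - 1" "even u \<longleftrightarrow> even v"
      using e xy ne by (auto simp: col_odd_def split: if_splits)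
    have uv: "u < n" "v < n" using x y xy by (auto simp: verts_S verts_C)
    have "\<not> adj (splitting_graph (cycle_graph n)) x y"
    proof
      assume "adj (splitting_graph (cycle_graph n)) x y"
      then have "v = Suc u mod n \<or> u = Suc v mod n" using adjG0_cases xy by blast
      moreover have "Suc u mod n = Suc u" "Suc v mod n = Suc v" using h uv by auto
      ultimately show False using h by auto
    qed
    then show "col_odd n (Orig x) \<le> 3 \<and> \<not> adj (splitting_graph (cycle_graph n)) x y"
      using h xy by (auto simp: col_odd_def)
  qed
qed (auto simp: col_odd_def)

theorem proposition8:
  fixes n m :: nat
  assumes "n \<ge> 3" and "m \<ge> 1"
  shows "packing_chromatic (fssd m (splitting_graph (cycle_graph n))) =
           (if even n then 3 else 5)"
  unfolding packing_chromatic_def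
proof (rule Least_equality)
  show "\<exists>c. packing_colouring (fssd m (splitting_graph (cycle_graph n))) (if even n then 3 else 5) c"
    using upper_even[OF _ assms(1), of m] upper_odd[OF _ assms(1), of m] by auto
next
  fix k assume "\<exists>c. packing_colouring (fssd m (splitting_graph (cycle_graph n))) k c"
  then obtain c where c: "packing_colouring (fssd m (splitting_graph (cycle_graph n))) k c" by blast
  show "(if even n then 3 else 5) \<le> k"
  proof (rule ccontr)
    assume "\<not> (if even n then 3 else 5) \<le> k"
    then have k4: "k \<le> 4" and "even n \<Longrightarrow> k \<le> 2" by (auto split: if_splits)
    then show False using lower2[OF assms c k4] lower_odd[OF assms c k4] by auto
  qed
qed

end
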